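(* Let $\Gamma$ be a semigroup with identity $e$, $\rho:\Gamma\to\mathrm{End}(G)$ an endomorphism action with $\rho(e)=\mathrm{Id}$ on a solenoid $G$, and $A$ a $\rho$-basis of $\widehat G$. Then: (1) $\rho$ is expansive if and only if $B_A(\epsilon)=\{e\}$ for some $\epsilon>0$; (2) $\rho_e$ has a non-trivial bounded orbit in $L(G)$ (i.e. some $p\ne 0$ with $\{\rho_e(\gamma)p:\gamma\in\Gamma\}$ bounded) if and only if $B^*_A(C)\ne\{0\}$ for some $C>0$.
   Context: A solenoid is a compact connected finite-dimensional metrizable abelian group (dual $\widehat G$ torsion-free of finite rank). $L(G)$ is the real vector space of homomorphisms $\widehat G\to\mathbb R$; $\widehat\rho(\gamma)(\chi)=\chi\circ\rho(\gamma)$ and $\rho_e(\gamma)(p)(\chi)=p(\chi\circ\rho(\gamma))$. A $\rho$-basis is a set $A\subset\widehat G$ generating $\widehat G$ as an abelian group with $A=\bigcup_{\gamma}\widehat\rho(\gamma)(F)$ for some finite $F\subset\widehat G$. Let $\delta:\mathbb S^1\to\mathbb R$, $\delta(z)=\inf\{|t|:t\in\mathbb R,e^{2\pi it}=z\}$. For $A\subset\widehat G$ and $r>0$: $B_A(r)=\{g\in G:\sup_{\chi\in A}\delta(\chi(g))<r\}$ and $B^*_A(r)=\{p\in L(G):\sup_{\chi\in A}|p(\chi)|<r\}$. The action is expansive if there is a neighborhood $U$ of the identity with $\bigcap_{\gamma}\rho(\gamma)^{-1}(U)=\{e\}$. *)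

theory Defs
  imports "HOL-Analysis.Analysis"
begin

text \<open>The dual group \<open>\<widehat>G\<close> is modelled as an abelian group type 'd.
  The solenoid G is the group of characters of 'd, i.e. homomorphisms
  'd \<rightarrow> S^1 (S^1 the complex unit circle), with the topology of pointwise
  convergence (compact-open topology for discrete 'd). Pontryagin duality
  identifies \<open>\<chi>(g)\<close> with \<open>g \<chi>\<close>.\<close>

fun nmul :: "nat \<Rightarrow> 'd::ab_group_add \<Rightarrow> 'd" where
  "nmul 0 x = 0"
| "nmul (Suc n) x = x + nmul n x"

inductive_set gen_subgroup :: "'d::ab_group_add set \<Rightarrow> 'd set" for A where
  gen_zero: "0 \<in> gen_subgroup A"
| gen_base: "a \<in> A \<Longrightarrow> a \<in> gen_subgroup A"
| gen_diff: "x \<in> gen_subgroup A \<Longrightarrow> y \<in> gen_subgroup A \<Longrightarrow> x - y \<in> gen_subgroup A"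

definition torsion_free :: "'d::ab_group_add itself \<Rightarrow> bool" where
  "torsion_free _ \<longleftrightarrow> (\<forall>(x::'d) n. n > 0 \<longrightarrow> nmul n x = 0 \<longrightarrow> x = 0)"

definition finite_rank :: "'d::ab_group_add itself \<Rightarrow> bool" where
  "finite_rank _ \<longleftrightarrow> (\<exists>S::'d set. finite S \<and> (\<forall>x. \<exists>n>0. nmul n x \<in> gen_subgroup S))"

definition solenoid :: "('d::ab_group_add \<Rightarrow> complex) set" where
  "solenoid = {g. (\<forall>x. cmod (g x) = 1) \<and> (\<forall>x y. g (x + y) = g x * g y)}"

definition sol_top :: "('d::ab_group_add \<Rightarrow> complex) topology" where
  "sol_top = subtopology (product_topology (\<lambda>_. euclidean) UNIV) solenoid"

definition sol_id :: "'d \<Rightarrow> complex" where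
  "sol_id = (\<lambda>_. 1)"

definition LG :: "('d::ab_group_add \<Rightarrow> real) set" where
  "LG = {p. \<forall>x y. p (x + y) = p x + p y}"

definition additive_endo :: "('d::ab_group_add \<Rightarrow> 'd) \<Rightarrow> bool" where
  "additive_endo f \<longleftrightarrow> (\<forall>x y. f (x + y) = f x + f y)"

text \<open>An endomorphism action \<rho> of the monoid 'g on G, given through its dual
  action \<open>\<phi> = \<widehat>\<rho>\<close> on \<open>\<widehat>G\<close>: \<open>\<rho>(\<gamma>) g = g \<circ> \<phi>(\<gamma>)\<close>.\<close>
definition rho :: "('g \<Rightarrow> 'd \<Rightarrow> 'd) \<Rightarrow> 'g \<Rightarrow> ('d \<Rightarrow> complex) \<Rightarrow> ('d \<Rightarrow> complex)" where
  "rho \<phi> \<gamma> g = g \<circ> \<phi> \<gamma>"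

definition rho_e :: "('g \<Rightarrow> 'd \<Rightarrow> 'd) \<Rightarrow> 'g \<Rightarrow> ('d \<Rightarrow> real) \<Rightarrow> ('d \<Rightarrow> real)" where
  "rho_e \<phi> \<gamma> p = p \<circ> \<phi> \<gamma>"

definition endo_action :: "('g::monoid_mult \<Rightarrow> 'd::ab_group_add \<Rightarrow> 'd) \<Rightarrow> bool" where
  "endo_action \<phi> \<longleftrightarrow> (\<forall>\<gamma>. additive_endo (\<phi> \<gamma>))
     \<and> (\<forall>\<gamma>1 \<gamma>2. rho \<phi> (\<gamma>1 * \<gamma>2) = rho \<phi> \<gamma>1 \<circ> rho \<phi> \<gamma>2)
     \<and> \<phi> 1 = id"

definition rho_basis :: "('g \<Rightarrow> 'd::ab_group_add \<Rightarrow> 'd) \<Rightarrow> 'd set \<Rightarrow> bool" where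
  "rho_basis \<phi> A \<longleftrightarrow> gen_subgroup A = UNIV \<and>
     (\<exists>F. finite F \<and> A = (\<Union>\<gamma>. \<phi> \<gamma> ` F))"

definition delta :: "complex \<Rightarrow> real" where
  "delta z = Inf {\<bar>t\<bar> | t::real. exp (2 * pi * \<i> * complex_of_real t) = z}"

text \<open>\<open>sup_{x\<in>A} f \<chi> < r\<close> written out as: some s < r bounds all values.\<close>
definition B_A :: "'d set \<Rightarrow> real \<Rightarrow> ('d::ab_group_add \<Rightarrow> complex) set" where
  "B_A A r = {g \<in> solenoid. \<exists>s<r. \<forall>x\<in>A. delta (g x) \<le> s}"

definition B_star_A :: "'d set \<Rightarrow> real \<Rightarrow> ('d::ab_group_add \<Rightarrow> real) set" where
  "B_star_A A r = {p \<in> LG. \<exists>s<r. \<forall>x\<in>A. \<bar>p x\<bar> \<le> s}"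

definition expansive :: "('g \<Rightarrow> 'd::ab_group_add \<Rightarrow> 'd) \<Rightarrow> bool" where
  "expansive \<phi> \<longleftrightarrow> (\<exists>U. openin sol_top U \<and> sol_id \<in> U \<and>
     (\<Inter>\<gamma>. {g \<in> solenoid. rho \<phi> \<gamma> g \<in> U}) = {sol_id})"

text \<open>Boundedness in the finite-dimensional space L(G) (product topology on \<open>\<real>^{\<widehat>G}\<close>):
  coordinatewise boundedness.\<close>
definition bounded_orbit :: "('g \<Rightarrow> 'd::ab_group_add \<Rightarrow> 'd) \<Rightarrow> ('d \<Rightarrow> real) \<Rightarrow> bool" where
  "bounded_orbit \<phi> p \<longleftrightarrow> (\<forall>x. \<exists>M. \<forall>\<gamma>. \<bar>rho_e \<phi> \<gamma> p x\<bar> \<le> M)"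

end

theory Submission imports Defs begin

lemma E_cis: "exp (2 * pi * \<i> * complex_of_real t) = cis (2 * pi * t)"
  by (simp add: cis_conv_exp mult_ac)

lemma delta_le: "exp (2 * pi * \<i> * complex_of_real t) = z \<Longrightarrow> delta z \<le> \<bar>t\<bar>"
  unfolding delta_def
  by (rule cInf_lower) (auto intro: bdd_belowI[where m=0])

lemma int_shift: assumes "\<bar>t0\<bar> \<le> 1/2" shows "\<bar>t0\<bar> \<le> \<bar>t0 + real_of_int n\<bar>"
proof (cases "n = 0")
  case False
  then have "\<bar>real_of_int n\<bar> \<ge> 1" by linarith
  then show ?thesis using assms by linarith
qed simp

lemma delta_attain:
  assumes "cmod z = 1"
  shows "\<exists>t. exp (2 * pi * \<i> * complex_of_real t) = z \<and> \<bar>t\<bar> \<le> 1/2 \<and> delta z = \<bar>t\<bar>"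
proof -
  define t0 where "t0 = Arg z / (2*pi)"
  have z0: "z \<noteq> 0" using assms by auto
  have e0: "exp (2 * pi * \<i> * complex_of_real t0) = z"
    using Arg_eq[OF z0] assms by (simp add: t0_def mult_ac)
  have b: "\<bar>t0\<bar> \<le> 1/2" using mpi_less_Arg[of z] Arg_le_pi[of z] pi_gt_zero
    by (auto simp: t0_def abs_le_iff field_simps)
  have lb: "\<bar>t0\<bar> \<le> \<bar>t\<bar>" if "exp (2 * pi * \<i> * complex_of_real t) = z" for t
  proof -
    from that e0 obtain n :: int where n: "2 * pi * \<i> * complex_of_real t = 2 * pi * \<i> * complex_of_real t0 + (of_int (2 * n) * pi) * \<i>"
      using exp_eq by metis
    have "Im (2 * pi * \<i> * complex_of_real t) = Im (2 * pi * \<i> * complex_of_real t0 + (of_int (2 * n) * pi) * \<i>)"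
      using n by simp
    then have "2*pi*t = 2*pi*t0 + 2*pi * of_int n" by (simp add: algebra_simps)
    then have "t = t0 + of_int n" using pi_gt_zero
      by (metis (no_types, opaque_lifting) distrib_left mult_cancel_left mult_eq_0_iff pi_neq_zero zero_neq_numeral)
    then show ?thesis using int_shift[OF b] by simp
  qed
  have "delta z = \<bar>t0\<bar>"
    unfolding delta_def
    by (rule cInf_eq_minimum) (use e0 lb in auto)
  then show ?thesis using e0 b by blast
qed

lemma delta_nonneg: "cmod z = 1 \<Longrightarrow> delta z \<ge> 0"
  using delta_attain by force

lemma delta_one: "delta 1 = 0"
  using delta_le[of 0 1] delta_nonneg[of 1] by simp

lemma delta_div: "cmod z = 1 \<Longrightarrow> cmod w = 1 \<Longrightarrow> delta (z / w) \<le> delta z + delta w"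
proof -
  assume "cmod z = 1" "cmod w = 1"
  then obtain t1 t2 where 1: "exp (2 * pi * \<i> * complex_of_real t1) = z" "delta z = \<bar>t1\<bar>"
     and 2: "exp (2 * pi * \<i> * complex_of_real t2) = w" "delta w = \<bar>t2\<bar>"
    using delta_attain by metis
  have "exp (2 * pi * \<i> * complex_of_real (t1 - t2)) = z / w"
    using 1 2 by (simp add: algebra_simps exp_diff)
  then have "delta (z/w) \<le> \<bar>t1 - t2\<bar>" by (rule delta_le)
  then show ?thesis using 1 2 by linarith
qed

lemma delta_close: "cmod z = 1 \<Longrightarrow> cmod (z - 1) \<le> 2 * pi * delta z"
proof -
  assume "cmod z = 1"
  then obtain t where t: "exp (2 * pi * \<i> * complex_of_real t) = z" "delta z = \<bar>t\<bar>"
    using delta_attain by metis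
  have "cmod (z - 1) = 2 * \<bar>sin (2*pi*t/2)\<bar>"
    using dist_exp_i_1[of "2*pi*t"] t by (simp add: mult_ac)
  also have "\<dots> \<le> 2 * \<bar>2*pi*t/2\<bar>" using abs_sin_x_le_abs_x by simp
  also have "\<dots> = 2 * pi * delta z" using t pi_gt_zero by (simp add: abs_mult)
  finally show ?thesis .
qed

lemma delta_Re:
  assumes "cmod z = 1" "0 < r" "r \<le> 1/4" "cos (2*pi*r) < Re z"
  shows "delta z < r"
proof -
  obtain t where t: "exp (2 * pi * \<i> * complex_of_real t) = z" "\<bar>t\<bar> \<le> 1/2" "delta z = \<bar>t\<bar>"
    using delta_attain assms(1) by metis
  have "Re z = cos (2*pi*t)" using t(1) E_cis by (metis cis.sel(1))
  also have "\<dots> = cos (2*pi*\<bar>t\<bar>)"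
    by (cases "t \<ge> 0") (auto simp: abs_if)
  finally have "cos (2*pi*r) < cos (2*pi*\<bar>t\<bar>)" using assms by simp
  then have "2*pi*\<bar>t\<bar> < 2*pi*r"
    using cos_mono_less_eq[of "2*pi*r" "2*pi*\<bar>t\<bar>"] t(2) assms(2,3) pi_gt_zero
    by (simp add: mult_right_le_one_le)
  then show ?thesis using t(3) pi_gt_zero by simp
qed


definition good :: "'d::ab_group_add set \<Rightarrow> 'd \<Rightarrow> real \<Rightarrow> bool" where
  "good A x L \<longleftrightarrow> L \<ge> 0 \<and> (\<forall>(N::'d \<Rightarrow> real) s f. N 0 = 0 \<longrightarrow> (\<forall>u v. N (u - v) \<le> N u + N v)
     \<longrightarrow> s \<ge> 0 \<longrightarrow> (\<forall>a\<in>A. N (f a) \<le> s) \<longrightarrow> (\<forall>u v. f (u - v) = f u - f v) \<longrightarrow> N (f x) \<le> L * s)"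

lemma gen_bound:
  fixes A :: "'d::ab_group_add set"
  assumes "x \<in> gen_subgroup A"
  shows "\<exists>L. good A x L"
  using assms
proof induction
  case gen_zero
  have "good A 0 0" unfolding good_def
  proof (intro conjI allI impI)
    fix N :: "'d \<Rightarrow> real" and s and f :: "'d \<Rightarrow> 'd"
    assume "N 0 = 0" "\<forall>u v. N (u - v) \<le> N u + N v" "s \<ge> 0" "\<forall>a\<in>A. N (f a) \<le> s"
      "\<forall>u v. f (u - v) = f u - f v"
    then have "f 0 = 0" by (metis diff_self)
    then show "N (f 0) \<le> 0 * s" using \<open>N 0 = 0\<close> by simp
  qed simp
  then show ?case by blast
next
  case (gen_base a)
  then have "good A a 1" unfolding good_def by auto
  then show ?case by blast
next
  case (gen_diff x y)
  obtain L1 where L1: "good A x L1" using gen_diff.IH(1) by blast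
  obtain L2 where L2: "good A y L2" using gen_diff.IH(2) by blast
  have "good A (x - y) (L1 + L2)" unfolding good_def
  proof (intro conjI allI impI)
    fix N :: "'d \<Rightarrow> real" and s and f :: "'d \<Rightarrow> 'd"
    assume h: "N 0 = 0" "\<forall>u v. N (u - v) \<le> N u + N v" "s \<ge> 0" "\<forall>a\<in>A. N (f a) \<le> s"
      "\<forall>u v. f (u - v) = f u - f v"
    have a: "N (f x) \<le> L1 * s" using L1 h unfolding good_def by blast
    have b: "N (f y) \<le> L2 * s" using L2 h unfolding good_def by blast
    have "N (f (x - y)) = N (f x - f y)" using h(5) by simp
    also have "\<dots> \<le> N (f x) + N (f y)" using h(2) by simp
    also have "\<dots> \<le> L1 * s + L2 * s" using a b by linarith
    finally show "N (f (x - y)) \<le> (L1 + L2) * s" by (simp add: algebra_simps)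
  next
    show "0 \<le> L1 + L2" using L1 L2 unfolding good_def by simp
  qed
  then show ?case by blast
qed

lemma good_mono: "good A x L \<Longrightarrow> L \<le> L' \<Longrightarrow> good A x L'"
  unfolding good_def
proof (intro conjI allI impI, goal_cases)
  case 1 then show ?case by linarith
next
  case (2 N s f)
  then have "N (f x) \<le> L * s" by blast
  also have "\<dots> \<le> L' * s" using 2 by (simp add: mult_right_mono)
  finally show ?case .
qed

lemma finite_ex_upper:
  assumes "finite K" "\<forall>k\<in>K. \<exists>L\<ge>(0::real). P k L" "\<forall>k L L'. P k L \<longrightarrow> L \<le> L' \<longrightarrow> P k L'"
  shows "\<exists>L\<ge>0. \<forall>k\<in>K. P k L"
  using assms
proof (induction K rule: finite_induct)
  case (insert x K)
  obtain L1 where L1: "L1 \<ge> 0" "\<forall>k\<in>K. P k L1" using insert.IH insert.prems by blast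
  obtain L2 where L2: "L2 \<ge> 0" "P x L2" using insert.prems(1) by blast
  have "\<forall>k\<in>insert x K. P k (max L1 L2)"
  proof
    fix k assume "k \<in> insert x K"
    then show "P k (max L1 L2)"
    proof
      assume "k = x" then show ?thesis using L2 insert.prems(2) by (meson max.cobounded2)
    next
      assume "k \<in> K" then show ?thesis using L1 insert.prems(2) by (meson max.cobounded1)
    qed
  qed
  moreover have "max L1 L2 \<ge> 0" using L1 by linarith
  ultimately show ?case by blast
qed auto

lemma finite_ex_lower:
  assumes "finite K" "\<forall>k\<in>K. \<exists>r>(0::real). P k r" "\<forall>k r r'. P k r \<longrightarrow> 0 < r' \<longrightarrow> r' \<le> r \<longrightarrow> P k r'"
  shows "\<exists>r>0. \<forall>k\<in>K. P k r"
  using assms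
proof (induction K rule: finite_induct)
  case empty
  show ?case by (intro exI[of _ 1]) auto
next
  case (insert x K)
  obtain r1 where r1: "r1 > 0" "\<forall>k\<in>K. P k r1" using insert.IH insert.prems by blast
  obtain r2 where r2: "r2 > 0" "P x r2" using insert.prems(1) by blast
  have m: "min r1 r2 > 0" using r1 r2 by simp
  have "\<forall>k\<in>insert x K. P k (min r1 r2)"
  proof
    fix k assume "k \<in> insert x K"
    then show "P k (min r1 r2)"
    proof
      assume "k = x" then show ?thesis using r2 m insert.prems(2) by (meson min.cobounded2)
    next
      assume "k \<in> K" then show ?thesis using r1 m insert.prems(2) by (meson min.cobounded1)
    qed
  qed
  then show ?case using m by blast
qed

lemma open_Re_set:
  assumes "finite F"
  shows "openin (product_topology (\<lambda>_. euclidean) UNIV) {g::'d \<Rightarrow> complex. \<forall>x\<in>F. c < Re (g x)}"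
  using assms
proof (induction F rule: finite_induct)
  case empty
  have "openin (product_topology (\<lambda>_::'d. (euclidean::complex topology)) UNIV)
          (topspace (product_topology (\<lambda>_::'d. (euclidean::complex topology)) UNIV))" by (rule openin_topspace)
  moreover have "topspace (product_topology (\<lambda>_::'d. (euclidean::complex topology)) UNIV) = UNIV"
    by (auto simp: PiE_def extensional_def)
  ultimately show ?case by simp
next
  case (insert x F)
  have "openin (product_topology (\<lambda>_. euclidean) UNIV)
      {g \<in> topspace (product_topology (\<lambda>_::'d. (euclidean::complex topology)) UNIV). g x \<in> {z. c < Re z}}"
    by (rule openin_continuous_map_preimage[OF continuous_map_product_projection])
       (auto simp: open_halfspace_Re_gt)
  then have "openin (product_topology (\<lambda>_. euclidean) UNIV) {g::'d \<Rightarrow> complex. c < Re (g x)}"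
    by simp
  then have "openin (product_topology (\<lambda>_. euclidean) UNIV)
     ({g::'d \<Rightarrow> complex. c < Re (g x)} \<inter> {g::'d \<Rightarrow> complex. \<forall>x\<in>F. c < Re (g x)})"
    using insert.IH by (rule openin_Int)
  moreover have "{g::'d \<Rightarrow> complex. \<forall>y\<in>insert x F. c < Re (g y)}
     = {g::'d \<Rightarrow> complex. c < Re (g x)} \<inter> {g::'d \<Rightarrow> complex. \<forall>x\<in>F. c < Re (g x)}" by auto
  ultimately show ?case by simp
qed


theorem proposition4p5:
  fixes \<phi> :: "'g::monoid_mult \<Rightarrow> 'd::ab_group_add \<Rightarrow> 'd"
    and A :: "'d set"
  assumes "torsion_free TYPE('d)"
    and "finite_rank TYPE('d)"
    and "endo_action \<phi>"
    and "rho_basis \<phi> A"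
  shows "(expansive \<phi> \<longleftrightarrow> (\<exists>\<epsilon>>0. B_A A \<epsilon> = {sol_id}))
    \<and> ((\<exists>p\<in>LG. p \<noteq> (\<lambda>_. 0) \<and> bounded_orbit \<phi> p) \<longleftrightarrow> (\<exists>C>0. B_star_A A C \<noteq> {\<lambda>_. 0}))"
proof -
  note act = assms(3)
  obtain F where F: "finite F" "A = (\<Union>\<gamma>. \<phi> \<gamma> ` F)" and gen: "gen_subgroup A = UNIV"
    using assms(4) unfolding rho_basis_def by blast
  have phi_mult: "\<phi> (a*b) x = \<phi> b (\<phi> a x)" for a b x
  proof -
    define g where "g = (\<lambda>y. if y = \<phi> b (\<phi> a x) then 1 else (0::complex))"
    from act have "rho \<phi> (a*b) g = (rho \<phi> a \<circ> rho \<phi> b) g" by (simp add: endo_action_def)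
    then have "rho \<phi> (a*b) g x = (rho \<phi> a \<circ> rho \<phi> b) g x" by simp
    then show ?thesis by (simp add: rho_def g_def split: if_splits)
  qed
  have add: "\<phi> \<gamma> (u + v) = \<phi> \<gamma> u + \<phi> \<gamma> v" for \<gamma> u v
    using act by (simp add: endo_action_def additive_endo_def)
  have phi_diff: "\<phi> \<gamma> (u - v) = \<phi> \<gamma> u - \<phi> \<gamma> v" for \<gamma> u v
    using add[of \<gamma> "u - v" v] by (simp add: eq_diff_eq)
  have Ainv: "\<phi> \<gamma> a \<in> A" if a_in: "a \<in> A" for \<gamma> a
  proof -
    obtain \<delta> f where "f \<in> F" "a = \<phi> \<delta> f" using a_in F(2) by blast
    then have "\<phi> \<gamma> a = \<phi> (\<delta> * \<gamma>) f" by (simp add: phi_mult)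
    then show ?thesis using \<open>f \<in> F\<close> F(2) by blast
  qed
  have sol_norm: "cmod (g u) = 1" if "g \<in> solenoid" for g :: "'d \<Rightarrow> complex" and u
    using that by (simp add: solenoid_def)
  have sol_add: "g (u + v) = g u * g v" if "g \<in> solenoid" for g :: "'d \<Rightarrow> complex" and u v
    using that by (simp add: solenoid_def)
  have sol_diff: "g (u - v) = g u / g v" if "g \<in> solenoid" for g :: "'d \<Rightarrow> complex" and u v
  proof -
    have "g v \<noteq> 0" using sol_norm[OF that, of v] by auto
    moreover have "g u = g (u - v) * g v" using sol_add[OF that, of "u - v" v] by simp
    ultimately show ?thesis by (simp add: field_simps)
  qed
  have sol_zero: "g 0 = 1" if "g \<in> solenoid" for g :: "'d \<Rightarrow> complex"
  proof -
    have "g 0 \<noteq> 0" using sol_norm[OF that, of 0] by auto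
    then show ?thesis using sol_diff[OF that, of 0 0] by simp
  qed
  have sol_comp: "g \<circ> \<phi> \<gamma> \<in> solenoid" if "g \<in> solenoid" for g :: "'d \<Rightarrow> complex" and \<gamma>
    using that by (simp add: solenoid_def add)
  have id_sol: "(sol_id :: 'd \<Rightarrow> complex) \<in> solenoid" by (simp add: solenoid_def sol_id_def)
  have rho_id: "rho \<phi> \<gamma> sol_id = sol_id" for \<gamma>
    by (auto simp: rho_def sol_id_def)
  have Ndelta: "(\<lambda>u. delta (g u)) 0 = 0 \<and> (\<forall>u v. delta (g (u - v)) \<le> delta (g u) + delta (g v))"
    if "g \<in> solenoid" for g :: "'d \<Rightarrow> complex"
    using that by (simp add: sol_zero delta_one sol_diff delta_div sol_norm)
  have good_all: "\<exists>L. good A x L" for x using gen_bound[of x A] gen by simp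

  have part1: "expansive \<phi> \<longleftrightarrow> (\<exists>\<epsilon>>0. B_A A \<epsilon> = {sol_id})"
  proof
    assume "expansive \<phi>"
    then obtain U where U: "openin sol_top U" "sol_id \<in> U"
      "(\<Inter>\<gamma>. {g \<in> solenoid. rho \<phi> \<gamma> g \<in> U}) = {sol_id}"
      unfolding expansive_def by blast
    obtain T where T: "openin (product_topology (\<lambda>_. euclidean) UNIV) T" "U = T \<inter> solenoid"
      using U(1) unfolding sol_top_def openin_subtopology by blast
    obtain W where W: "finite {i. W i \<noteq> UNIV}" "\<forall>i. open (W i)" "sol_id \<in> PiE UNIV W"
       "PiE UNIV W \<subseteq> T"
      using T(1) U(2) T(2) unfolding openin_product_topology_alt by auto
    define K where "K = {i. W i \<noteq> UNIV}"
    have "\<forall>k\<in>K. \<exists>r>0. ball 1 r \<subseteq> W k"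
    proof
      fix k assume "k \<in> K"
      have "1 \<in> W k" using W(3) by (auto simp: sol_id_def)
      then show "\<exists>r>0. ball 1 r \<subseteq> W k" using W(2) open_contains_ball by blast
    qed
    then obtain r where r: "r > 0" "\<forall>k\<in>K. ball 1 r \<subseteq> W k"
      using finite_ex_lower[of K "\<lambda>k r. ball 1 r \<subseteq> W k"] W(1) K_def by fastforce
    obtain L where L: "L \<ge> 0" "\<forall>k\<in>K. good A k L"
      using finite_ex_upper[of K "\<lambda>k L. good A k L"] W(1) K_def good_all good_mono good_def
      by (metis (no_types, lifting))
    define \<epsilon> where "\<epsilon> = r / (2 * pi * (L + 1))"
    have \<epsilon>pos: "\<epsilon> > 0" using r L by (simp add: \<epsilon>_def)
    have "B_A A \<epsilon> = {sol_id}"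
    proof
      show "{sol_id} \<subseteq> B_A A \<epsilon>"
        using id_sol \<epsilon>pos by (auto simp: B_A_def sol_id_def delta_one intro!: exI[of _ 0])
    next
      show "B_A A \<epsilon> \<subseteq> {sol_id}"
      proof
        fix g assume "g \<in> B_A A \<epsilon>"
        then obtain s where g: "g \<in> solenoid" "s < \<epsilon>" "\<forall>x\<in>A. delta (g x) \<le> s"
          unfolding B_A_def by blast
        define s' where "s' = max s 0"
        have s': "s' \<ge> 0" "s' < \<epsilon>" "\<forall>x\<in>A. delta (g x) \<le> s'" using g \<epsilon>pos by (auto simp: s'_def)
        have "rho \<phi> \<gamma> g \<in> U" for \<gamma>
        proof -
          have "g \<circ> \<phi> \<gamma> \<in> PiE UNIV W"
          proof (rule PiE_I)
            fix i
            have "g (\<phi> \<gamma> i) \<in> W i"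
            proof (cases "i \<in> K")
              case False then show ?thesis by (simp add: K_def)
            next
              case True
              have gi: "good A i L" using L(2) True by blast
              have A': "\<forall>a\<in>A. delta (g (\<phi> \<gamma> a)) \<le> s'" using s'(3) Ainv by blast
              have fd: "\<forall>u v. \<phi> \<gamma> (u - v) = \<phi> \<gamma> u - \<phi> \<gamma> v" using phi_diff by blast
              have "delta (g (\<phi> \<gamma> i)) \<le> L * s'"
                using gi[unfolded good_def, THEN conjunct2, THEN spec[of _ "\<lambda>u. delta (g u)"],
                   THEN spec[of _ s'], THEN spec[of _ "\<phi> \<gamma>"]] Ndelta[OF g(1)] s'(1) A' fd
                by simp
              also have "\<dots> \<le> L * \<epsilon>" using s' L by (simp add: mult_left_mono)
              finally have "2 * pi * delta (g (\<phi> \<gamma> i)) \<le> 2 * pi * (L * \<epsilon>)" by simp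
              also have "2 * pi * (L * \<epsilon>) < r"
              proof -
                have d1: "L + 1 \<noteq> 0" using L(1) by simp
                have "2 * pi * (L * \<epsilon>) = L * (r * ((2 * pi) / (2 * pi * (L + 1))))"
                  by (simp add: \<epsilon>_def)
                also have "(2 * pi) / (2 * pi * (L + 1)) = 1 / (L + 1)" using d1 by simp
                finally have e: "2 * pi * (L * \<epsilon>) = r * (L / (L + 1))" by simp
                have "L / (L + 1) < 1" using L(1) by simp
                then have "r * (L / (L + 1)) < r * 1" using r(1) by (intro mult_strict_left_mono) auto
                then show ?thesis using e by simp
              qed
              finally have "cmod (g (\<phi> \<gamma> i) - 1) < r"
                using delta_close[OF sol_norm[OF g(1)]] by (meson le_less_trans)
              then have "g (\<phi> \<gamma> i) \<in> ball 1 r" by (simp add: dist_norm norm_minus_commute)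
              then show ?thesis using r(2) True by blast
            qed
            then show "(g \<circ> \<phi> \<gamma>) i \<in> W i" by simp
          qed simp
          then show ?thesis using W(4) T(2) sol_comp[OF g(1)] by (auto simp: rho_def)
        qed
        then have "g \<in> (\<Inter>\<gamma>. {g \<in> solenoid. rho \<phi> \<gamma> g \<in> U})" using g(1) by blast
        then show "g \<in> {sol_id}" using U(3) by blast
      qed
    qed
    then show "\<exists>\<epsilon>>0. B_A A \<epsilon> = {sol_id}" using \<epsilon>pos by blast
  next
    assume "\<exists>\<epsilon>>0. B_A A \<epsilon> = {sol_id}"
    then obtain \<epsilon> where \<epsilon>: "\<epsilon> > 0" "B_A A \<epsilon> = {sol_id}" by blast
    define s where "s = min (\<epsilon>/2) (1/4)"
    have s: "0 < s" "s \<le> 1/4" "s < \<epsilon>" using \<epsilon> by (auto simp: s_def)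
    define c where "c = cos (2 * pi * s)"
    define U where "U = {g \<in> solenoid. \<forall>x\<in>F. c < Re (g x)}"
    have "openin sol_top U"
    proof -
      have "U = {g::'d \<Rightarrow> complex. \<forall>x\<in>F. c < Re (g x)} \<inter> solenoid" by (auto simp: U_def)
      then show ?thesis unfolding sol_top_def openin_subtopology
        using open_Re_set[OF F(1), of c] by blast
    qed
    moreover have "sol_id \<in> U"
    proof -
      have "cos (2 * pi * s) < cos 0"
      proof -
        have "2 * pi * s \<le> pi" using s(2) pi_gt_zero by simp
        moreover have "0 < 2 * pi * s" using s(1) pi_gt_zero by simp
        ultimately show ?thesis using cos_mono_less_eq[of "2 * pi * s" 0] pi_gt_zero by simp
      qed
      then show ?thesis using id_sol by (simp add: U_def c_def sol_id_def)
    qed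
    moreover have "(\<Inter>\<gamma>. {g \<in> solenoid. rho \<phi> \<gamma> g \<in> U}) = {sol_id}"
    proof
      show "{sol_id} \<subseteq> (\<Inter>\<gamma>. {g \<in> solenoid. rho \<phi> \<gamma> g \<in> U})"
        using id_sol rho_id \<open>sol_id \<in> U\<close> by auto
    next
      show "(\<Inter>\<gamma>. {g \<in> solenoid. rho \<phi> \<gamma> g \<in> U}) \<subseteq> {sol_id}"
      proof
        fix g assume "g \<in> (\<Inter>\<gamma>. {g \<in> solenoid. rho \<phi> \<gamma> g \<in> U})"
        then have g: "g \<in> solenoid" "\<And>\<gamma>. rho \<phi> \<gamma> g \<in> U" by auto
        have "\<forall>x\<in>A. delta (g x) \<le> s"
        proof
          fix x assume "x \<in> A"
          then obtain \<gamma> f where f: "f \<in> F" "x = \<phi> \<gamma> f" using F(2) by blast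
          have "c < Re (g x)" using g(2)[of \<gamma>] f by (auto simp: U_def rho_def)
          then have "delta (g x) < s" using delta_Re[OF sol_norm[OF g(1)] s(1,2)] by (simp add: c_def)
          then show "delta (g x) \<le> s" by simp
        qed
        then have "g \<in> B_A A \<epsilon>" using g(1) s(3) by (auto simp: B_A_def)
        then show "g \<in> {sol_id}" using \<epsilon>(2) by simp
      qed
    qed
    ultimately show "expansive \<phi>" unfolding expansive_def by blast
  qed

  have part2: "(\<exists>p\<in>LG. p \<noteq> (\<lambda>_. 0) \<and> bounded_orbit \<phi> p) \<longleftrightarrow> (\<exists>C>0. B_star_A A C \<noteq> {\<lambda>_. 0})"
  proof
    assume "\<exists>p\<in>LG. p \<noteq> (\<lambda>_. 0) \<and> bounded_orbit \<phi> p"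
    then obtain p where p: "p \<in> LG" "p \<noteq> (\<lambda>_. 0)" "\<forall>x. \<exists>M. \<forall>\<gamma>. \<bar>p (\<phi> \<gamma> x)\<bar> \<le> M"
      unfolding bounded_orbit_def rho_e_def by auto
    have ex: "\<forall>k\<in>F. \<exists>M\<ge>0. \<forall>\<gamma>. \<bar>p (\<phi> \<gamma> k)\<bar> \<le> M"
    proof
      fix k
      obtain M where "\<forall>\<gamma>. \<bar>p (\<phi> \<gamma> k)\<bar> \<le> M" using p(3) by blast
      then have "\<forall>\<gamma>. \<bar>p (\<phi> \<gamma> k)\<bar> \<le> max M 0" by (simp add: le_max_iff_disj)
      then show "\<exists>M\<ge>0. \<forall>\<gamma>. \<bar>p (\<phi> \<gamma> k)\<bar> \<le> M"
        by (intro exI[of _ "max M 0"]) simp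
    qed
    have mono: "\<forall>k L L'. (\<forall>\<gamma>. \<bar>p (\<phi> \<gamma> k)\<bar> \<le> L) \<longrightarrow> L \<le> L' \<longrightarrow> (\<forall>\<gamma>. \<bar>p (\<phi> \<gamma> k)\<bar> \<le> L')"
      by (meson order.trans)
    obtain M where M: "M \<ge> 0" "\<forall>k\<in>F. \<forall>\<gamma>. \<bar>p (\<phi> \<gamma> k)\<bar> \<le> M"
      using finite_ex_upper[OF F(1) ex mono] by blast
    have "\<forall>x\<in>A. \<bar>p x\<bar> \<le> M" using M(2) F(2) by blast
    then have "p \<in> B_star_A A (M + 1)" using p(1) by (auto simp: B_star_A_def intro!: exI[of _ M])
    then show "\<exists>C>0. B_star_A A C \<noteq> {\<lambda>_. 0}"
      using p(2) M(1) by (intro exI[of _ "M + 1"]) auto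
  next
    assume "\<exists>C>0. B_star_A A C \<noteq> {\<lambda>_. 0}"
    then obtain C where C: "C > 0" "B_star_A A C \<noteq> {\<lambda>_. 0}" by blast
    have "(\<lambda>_. 0) \<in> B_star_A A C" using C(1) by (auto simp: B_star_A_def LG_def intro!: exI[of _ 0])
    then obtain p where "p \<in> B_star_A A C" "p \<noteq> (\<lambda>_. 0)" using C(2) by blast
    then obtain s where p: "p \<in> LG" "p \<noteq> (\<lambda>_. 0)" "\<forall>x\<in>A. \<bar>p x\<bar> \<le> s"
      unfolding B_star_A_def by blast
    define s' where "s' = max s 0"
    have s': "s' \<ge> 0" "\<forall>x\<in>A. \<bar>p x\<bar> \<le> s'" using p(3) by (auto simp: s'_def)
    have padd: "p (u + v) = p u + p v" for u v using p(1) by (simp add: LG_def)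
    have p0: "p 0 = 0" using padd[of 0 0] by simp
    have pdiff: "p (u - v) = p u - p v" for u v using padd[of "u - v" v] by simp
    have "bounded_orbit \<phi> p" unfolding bounded_orbit_def rho_e_def
    proof
      fix x
      obtain L where L: "good A x L" using good_all by blast
      have "\<forall>\<gamma>. \<bar>(p \<circ> \<phi> \<gamma>) x\<bar> \<le> L * s'"
      proof
        fix \<gamma>
        have "(\<lambda>u. \<bar>p u\<bar>) 0 = 0" "\<forall>u v. \<bar>p (u - v)\<bar> \<le> \<bar>p u\<bar> + \<bar>p v\<bar>"
          using p0 pdiff by auto
        moreover have "\<forall>a\<in>A. \<bar>p (\<phi> \<gamma> a)\<bar> \<le> s'" using s'(2) Ainv by blast
        moreover have fd: "\<forall>u v. \<phi> \<gamma> (u - v) = \<phi> \<gamma> u - \<phi> \<gamma> v" using phi_diff by blast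
        ultimately show "\<bar>(p \<circ> \<phi> \<gamma>) x\<bar> \<le> L * s'"
          using L[unfolded good_def, THEN conjunct2, THEN spec[of _ "\<lambda>u. \<bar>p u\<bar>"],
                   THEN spec[of _ s'], THEN spec[of _ "\<phi> \<gamma>"]] s'(1) by simp
      qed
      then show "\<exists>M. \<forall>\<gamma>. \<bar>(p \<circ> \<phi> \<gamma>) x\<bar> \<le> M" by blast
    qed
    then show "\<exists>p\<in>LG. p \<noteq> (\<lambda>_. 0) \<and> bounded_orbit \<phi> p" using p by blast
  qed
  show ?thesis using part1 part2 by blast
qed

end
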